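(* Let $V$ be an $n$-dimensional vector space over a field $\mathbb{F}$ with an alternating bilinear form $\mathsf{s}$ of maximal rank, and let $\Gamma=\Gamma(V)$. For every hyperbolic basis $\{e_i,f_j\mid 1\le i\le r+d,\ 1\le j\le r\}$ of $V$ (where $2r=\mathrm{rank}(V)$, $d=\dim\mathrm{Rad}(V)$), setting $h_{2i-1}=e_i$ ($1\le i\le r+d$), $h_{2j}=f_j$ ($1\le j\le r$) and $C_l=\langle h_1,\dots,h_l\rangle$, the collection $\{C_l\}_{l=1}^{n-1}$ is a chamber of $\Gamma$. Conversely, every chamber of $\Gamma$ arises in this way from some (not necessarily unique) hyperbolic basis of $V$.
   Context: $U^\perp=\{v\in V:\mathsf{s}(u,v)=0\ \forall u\in U\}$, $\mathrm{Rad}(U)=U\cap U^\perp$, $\mathrm{rank}(U)=\dim U-\dim\mathrm{Rad}(U)$; maximal rank means $\dim\mathrm{Rad}(V)\le1$. A hyperbolic basis of $V$ is a basis $\{e_i,f_j\mid 1\le i\le r+d, 1\le j\le r\}$ with $\mathsf{s}(e_i,e_j)=\mathsf{s}(f_i,f_j)=0$ and $\mathsf{s}(e_i,f_j)=\delta_{ij}$ for $1\le i,j\le r$, and $\{e_{r+i}\}_{1\le i\le d}$ a basis of $\mathrm{Rad}(V)$. $\Gamma(V)$: for $i\in I=\{1,\dots,n-1\}$ the objects of type $i$ are the $i$-dimensional subspaces $U$ with $U\cap\mathrm{Rad}(V)=0$ and $\dim\mathrm{Rad}(U)\le1$; $X,Y$ are incident iff $X=Y$ or $X\subseteq Y$ with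 $X\cap\mathrm{Rad}(Y)=0$ or vice versa. A flag is a set of pairwise incident objects; a chamber is a flag containing one object of each type in $I$. *)

theory Defs
  imports Complex_Main
begin

text \<open>Alternating bilinear forms on a vector space given by a scalar multiplication
  scale (a vector_space locale instance); the whole space V is UNIV.\<close>

definition alt_bilinear :: "('f::field \<Rightarrow> 'v::ab_group_add \<Rightarrow> 'v) \<Rightarrow> ('v \<Rightarrow> 'v \<Rightarrow> 'f) \<Rightarrow> bool" where
  "alt_bilinear scale s \<longleftrightarrow>
     (\<forall>x y z. s (x + y) z = s x z + s y z) \<and>
     (\<forall>x y z. s x (y + z) = s x y + s x z) \<and>
     (\<forall>c x y. s (scale c x) y = c * s x y) \<and>
     (\<forall>c x y. s x (scale c y) = c * s x y) \<and>
     (\<forall>x. s x x = 0)"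

definition orth :: "('v \<Rightarrow> 'v \<Rightarrow> 'f::zero) \<Rightarrow> 'v set \<Rightarrow> 'v set" where
  "orth s U = {v. \<forall>u\<in>U. s u v = 0}"

definition Rad :: "('v \<Rightarrow> 'v \<Rightarrow> 'f::zero) \<Rightarrow> 'v set \<Rightarrow> 'v set" where
  "Rad s U = U \<inter> orth s U"

definition rank :: "('f::field \<Rightarrow> 'v::ab_group_add \<Rightarrow> 'v) \<Rightarrow> ('v \<Rightarrow> 'v \<Rightarrow> 'f) \<Rightarrow> 'v set \<Rightarrow> nat" where
  "rank scale s U = vector_space.dim scale U - vector_space.dim scale (Rad s U)"

definition max_rank :: "('f::field \<Rightarrow> 'v::ab_group_add \<Rightarrow> 'v) \<Rightarrow> ('v \<Rightarrow> 'v \<Rightarrow> 'f) \<Rightarrow> bool" where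
  "max_rank scale s \<longleftrightarrow> vector_space.dim scale (Rad s UNIV) \<le> 1"

definition hseq :: "(nat \<Rightarrow> 'v) \<Rightarrow> (nat \<Rightarrow> 'v) \<Rightarrow> nat \<Rightarrow> 'v" where
  "hseq e f l = (if odd l then e ((l + 1) div 2) else f (l div 2))"

definition hyperbolic_basis ::
  "('f::field \<Rightarrow> 'v::ab_group_add \<Rightarrow> 'v) \<Rightarrow> ('v \<Rightarrow> 'v \<Rightarrow> 'f) \<Rightarrow> nat \<Rightarrow> nat \<Rightarrow> (nat \<Rightarrow> 'v) \<Rightarrow> (nat \<Rightarrow> 'v) \<Rightarrow> bool" where
  "hyperbolic_basis scale s r d e f \<longleftrightarrow>
     2 * r = rank scale s UNIV \<and> d = vector_space.dim scale (Rad s UNIV) \<and>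
     inj_on (hseq e f) {1..2*r+d} \<and>
     module.independent scale (hseq e f ` {1..2*r+d}) \<and>
     module.span scale (hseq e f ` {1..2*r+d}) = UNIV \<and>
     (\<forall>i\<in>{1..r}. \<forall>j\<in>{1..r}. s (e i) (e j) = 0 \<and> s (f i) (f j) = 0 \<and>
        s (e i) (f j) = (if i = j then 1 else 0)) \<and>
     module.independent scale (e ` {r+1..r+d}) \<and>
     module.span scale (e ` {r+1..r+d}) = Rad s UNIV"

definition hflag :: "('f::field \<Rightarrow> 'v::ab_group_add \<Rightarrow> 'v) \<Rightarrow> (nat \<Rightarrow> 'v) \<Rightarrow> (nat \<Rightarrow> 'v) \<Rightarrow> nat \<Rightarrow> 'v set" where
  "hflag scale e f l = module.span scale (hseq e f ` {1..l})"

definition gobj :: "('f::field \<Rightarrow> 'v::ab_group_add \<Rightarrow> 'v) \<Rightarrow> ('v \<Rightarrow> 'v \<Rightarrow> 'f) \<Rightarrow> nat \<Rightarrow> 'v set \<Rightarrow> bool" where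
  "gobj scale s i U \<longleftrightarrow> module.subspace scale U \<and> vector_space.dim scale U = i \<and>
     U \<inter> Rad s UNIV = {0} \<and> vector_space.dim scale (Rad s U) \<le> 1"

definition incident :: "('v::zero \<Rightarrow> 'v \<Rightarrow> 'f::zero) \<Rightarrow> 'v set \<Rightarrow> 'v set \<Rightarrow> bool" where
  "incident s X Y \<longleftrightarrow> X = Y \<or> (X \<subseteq> Y \<and> X \<inter> Rad s Y = {0}) \<or> (Y \<subseteq> X \<and> Y \<inter> Rad s X = {0})"

definition chamber :: "('f::field \<Rightarrow> 'v::ab_group_add \<Rightarrow> 'v) \<Rightarrow> ('v \<Rightarrow> 'v \<Rightarrow> 'f) \<Rightarrow> nat \<Rightarrow> 'v set set \<Rightarrow> bool" where
  "chamber scale s n C \<longleftrightarrow>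
     (\<forall>X\<in>C. \<exists>i\<in>{1..n-1}. gobj scale s i X) \<and>
     (\<forall>X\<in>C. \<forall>Y\<in>C. incident s X Y) \<and>
     (\<forall>i\<in>{1..n-1}. \<exists>X\<in>C. gobj scale s i X)"

end

theory Submission
  imports Defs
begin

locale altsp = finite_dimensional_vector_space scale Basis
  for scale :: "'f::field \<Rightarrow> 'v::ab_group_add \<Rightarrow> 'v" and Basis :: "'v set" +
  fixes s :: "'v \<Rightarrow> 'v \<Rightarrow> 'f"
  assumes alt: "alt_bilinear scale s"
begin

lemma sadd_l: "s (x + y) z = s x z + s y z" using alt by (simp add: alt_bilinear_def)
lemma sadd_r: "s x (y + z) = s x y + s x z" using alt by (simp add: alt_bilinear_def)
lemma sscale_l: "s (scale c x) y = c * s x y" using alt by (simp add: alt_bilinear_def)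
lemma sscale_r: "s x (scale c y) = c * s x y" using alt by (simp add: alt_bilinear_def)
lemma sself: "s x x = 0" using alt by (simp add: alt_bilinear_def)

lemma s0l[simp]: "s 0 y = 0" using sadd_l[of 0 0 y] by (metis add.right_neutral add_left_cancel)
lemma s0r[simp]: "s y 0 = 0" using sadd_r[of y 0 0] by (metis add.right_neutral add_left_cancel)
lemma sneg_l: "s (- x) y = - s x y" using sadd_l[of x "-x" y] by (metis add.commute eq_neg_iff_add_eq_0 right_minus s0l)
lemma sneg_r: "s y (- x) = - s y x" using sadd_r[of y x "-x"] by (metis add.commute eq_neg_iff_add_eq_0 right_minus s0r)
lemma sdiff_l: "s (x - y) z = s x z - s y z" using sadd_l[of x "-y" z] sneg_l[of y z] by simp
lemma sdiff_r: "s z (x - y) = s z x - s z y" using sadd_r[of z x "-y"] sneg_r[of z y] by simp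
lemma santi: "s y x = - s x y"
proof -
  have "s (x + y) (x + y) = s x x + s y x + (s x y + s y y)" by (simp only: sadd_l sadd_r)
  then have "s y x + s x y = 0" by (simp add: sself add.commute)
  then show ?thesis by (metis eq_neg_iff_add_eq_0)
qed
lemma ssum_l: "s (sum g A) y = (\<Sum>a\<in>A. s (g a) y)"
  by (induct A rule: infinite_finite_induct) (simp_all add: sadd_l)

lemma ssum_r: "s y (sum g A) = (\<Sum>a\<in>A. s y (g a))"
  by (induct A rule: infinite_finite_induct) (simp_all add: sadd_r)

lemma subspace_lorth: "subspace {x. s x w = 0}"
  unfolding subspace_def by (simp add: sadd_l sscale_l)
lemma subspace_rorth: "subspace {x. s w x = 0}"
  unfolding subspace_def by (simp add: sadd_r sscale_r)

lemma span_lorth: "(\<And>x. x \<in> A \<Longrightarrow> s x w = 0) \<Longrightarrow> x \<in> span A \<Longrightarrow> s x w = 0"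
  using span_minimal[OF _ subspace_lorth, of A w] by auto
lemma span_rorth: "(\<And>x. x \<in> A \<Longrightarrow> s w x = 0) \<Longrightarrow> x \<in> span A \<Longrightarrow> s w x = 0"
  using span_minimal[OF _ subspace_rorth, of A w] by auto

lemma sub_eq_dim: "subspace A \<Longrightarrow> subspace B \<Longrightarrow> A \<subseteq> B \<Longrightarrow> dim B \<le> dim A \<Longrightarrow> A = B"
  using subspace_dim_equal by blast

lemma Rad_subspace: "subspace U \<Longrightarrow> subspace (Rad s U)"
  unfolding Rad_def orth_def subspace_def by (auto simp: sadd_r sscale_r)


definition pp :: "nat \<Rightarrow> nat" where "pp a = (if odd a then a + 1 else a - 1)"
definition sg :: "nat \<Rightarrow> 'f" where "sg a = (if odd a then 1 else -1)"

lemma sg_nz: "sg a \<noteq> 0" by (simp add: sg_def)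

lemma hb_basic:
  assumes hb: "hyperbolic_basis scale s r d e f" and mr: "dim (Rad s UNIV) \<le> 1"
  shows "d \<le> 1" "dim (UNIV::'v set) = 2 * r + d"
proof -
  show d1: "d \<le> 1" using hb mr by (simp add: hyperbolic_basis_def)
  have "dim (Rad s UNIV) \<le> dim (UNIV::'v set)" by (rule dim_subset) simp
  then show "dim (UNIV::'v set) = 2 * r + d" using hb by (simp add: hyperbolic_basis_def rank_def)
qed

lemma hb_pair:
  assumes hb: "hyperbolic_basis scale s r d e f" and mr: "dim (Rad s UNIV) \<le> 1"
    and a: "a \<in> {1..2*r+d}" and b: "b \<in> {1..2*r}"
  shows "s (hseq e f a) (hseq e f b) = (if a = pp b then sg a else 0)"
proof (cases "a \<le> 2 * r")
  case True
  have rel: "\<And>i j. i \<in> {1..r} \<Longrightarrow> j \<in> {1..r} \<Longrightarrow> s (e i) (e j) = 0 \<and> s (f i) (f j) = 0 \<and>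
        s (e i) (f j) = (if i = j then 1 else 0)"
    using hb by (simp add: hyperbolic_basis_def)
  have ia: "odd a \<Longrightarrow> (a+1) div 2 \<in> {1..r}" "even a \<Longrightarrow> a div 2 \<in> {1..r}"
    using a True by (simp, presburger)+
  have ib: "odd b \<Longrightarrow> (b+1) div 2 \<in> {1..r}" "even b \<Longrightarrow> b div 2 \<in> {1..r}"
    using b by (simp, presburger)+
  show ?thesis
  proof (cases "odd a")
    case oa: True
    show ?thesis
    proof (cases "odd b")
      case True
      have "s (e ((a+1) div 2)) (e ((b+1) div 2)) = 0" using rel ia ib oa True by blast
      moreover have "a \<noteq> pp b" using oa True by (auto simp: pp_def)
      ultimately show ?thesis using oa True by (simp add: hseq_def)
    next
      case False
      have eq: "(a = b - 1) = ((a+1) div 2 = b div 2)" using oa False b by presburger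
      have "s (e ((a+1) div 2)) (f (b div 2)) = (if (a+1) div 2 = b div 2 then 1 else 0)"
        using rel ia ib oa False by blast
      then show ?thesis using oa False eq by (simp add: hseq_def pp_def sg_def)
    qed
  next
    case ea: False
    show ?thesis
    proof (cases "odd b")
      case True
      have eq: "(a = b + 1) = (a div 2 = (b+1) div 2)" using ea True a by presburger
      have "s (e ((b+1) div 2)) (f (a div 2)) = (if (b+1) div 2 = a div 2 then 1 else 0)"
        using rel ia ib ea True by blast
      then have "s (f (a div 2)) (e ((b+1) div 2)) = - (if (b+1) div 2 = a div 2 then 1 else 0)"
        using santi[of "e ((b+1) div 2)" "f (a div 2)"] by simp
      then show ?thesis using ea True eq by (auto simp: hseq_def pp_def sg_def)
    next
      case False
      have "s (f (a div 2)) (f (b div 2)) = 0" using rel ia ib ea False by blast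
      moreover have "a \<noteq> pp b" using ea False a b by (auto simp: pp_def)
      ultimately show ?thesis using ea False by (simp add: hseq_def)
    qed
  qed
next
  case False
  have d1: "d \<le> 1" using hb_basic[OF hb mr] by simp
  then have a2: "a = 2*r+1" "d = 1" using a False by auto
  then have "hseq e f a = e (r+1)" by (simp add: hseq_def)
  moreover have "e (r+1) \<in> Rad s UNIV"
  proof -
    have sp: "span (e ` {r+1..r+d}) = Rad s UNIV" using hb unfolding hyperbolic_basis_def by blast
    have "e (r+1) \<in> e ` {r+1..r+d}" using a2 by simp
    then show ?thesis using span_base sp by blast
  qed
  ultimately have "s (hseq e f b) (hseq e f a) = 0" by (simp add: Rad_def orth_def)
  then have "s (hseq e f a) (hseq e f b) = 0" using santi by (metis neg_equal_0_iff_equal)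
  moreover have "a \<noteq> pp b" using a2 b by (auto simp: pp_def)
  ultimately show ?thesis by simp
qed


lemma hb_K:
  assumes hb: "hyperbolic_basis scale s r d e f" and mr: "dim (Rad s UNIV) \<le> 1"
    and l: "l \<le> 2*r+d" and v: "v \<in> span (hseq e f ` {1..l})"
  obtains c where "v = (\<Sum>a\<in>{1..l}. scale (c a) (hseq e f a))"
    "\<And>b. b \<in> {1..2*r} \<Longrightarrow> s v (hseq e f b) = (if pp b \<in> {1..l} then c (pp b) * sg (pp b) else 0)"
proof -
  let ?h = "hseq e f"
  have inj: "inj_on ?h {1..l}" using hb l inj_on_subset[of ?h "{1..2*r+d}" "{1..l}"]
    by (auto simp: hyperbolic_basis_def)
  obtain u where u: "v = (\<Sum>w\<in>?h ` {1..l}. scale (u w) w)"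
    using v span_finite[of "?h ` {1..l}"] by auto
  have v2: "v = (\<Sum>a\<in>{1..l}. scale (u (?h a)) (?h a))"
    using u sum.reindex[OF inj, of "\<lambda>w. scale (u w) w"] by simp
  have "s v (?h b) = (if pp b \<in> {1..l} then u (?h (pp b)) * sg (pp b) else 0)" if b: "b \<in> {1..2*r}" for b
  proof -
    have "s v (?h b) = (\<Sum>a\<in>{1..l}. u (?h a) * s (?h a) (?h b))"
      by (simp add: v2 ssum_l sscale_l)
    also have "\<dots> = (\<Sum>a\<in>{1..l}. if a = pp b then u (?h a) * sg a else 0)"
      using hb_pair[OF hb mr _ b] l by (intro sum.cong) auto
    also have "\<dots> = (if pp b \<in> {1..l} then u (?h (pp b)) * sg (pp b) else 0)"
      by (simp add: sum.delta')
    finally show ?thesis .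
  qed
  then show ?thesis using that[of "\<lambda>a. u (?h a)"] v2 by blast
qed

lemma pp_range: "b \<in> {1..2*r} \<Longrightarrow> pp b \<in> {1..2*r}" by (auto simp: pp_def) presburger
lemma pp_pp: "b \<ge> 1 \<Longrightarrow> pp (pp b) = b" by (auto simp: pp_def)

lemma hb_indep:
  assumes hb: "hyperbolic_basis scale s r d e f" and l: "l \<le> 2*r+d"
  shows "dim (span (hseq e f ` {1..l})) = l"
proof -
  have inj: "inj_on (hseq e f) {1..l}" using hb l inj_on_subset[of "hseq e f" "{1..2*r+d}" "{1..l}"]
    by (auto simp: hyperbolic_basis_def)
  have sub: "hseq e f ` {1..l} \<subseteq> hseq e f ` {1..2*r+d}" using l by auto
  have "independent (hseq e f ` {1..2*r+d})" using hb unfolding hyperbolic_basis_def by blast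
  then have "independent (hseq e f ` {1..l})"
    using independent_mono[OF _ sub] by blast
  then show ?thesis using dim_span_eq_card_independent card_image[OF inj] by simp
qed

lemma hb_radV:
  assumes hb: "hyperbolic_basis scale s r d e f" and mr: "dim (Rad s UNIV) \<le> 1"
    and l: "l \<le> 2*r" and v: "v \<in> span (hseq e f ` {1..l})" and vR: "v \<in> Rad s UNIV"
  shows "v = 0"
proof -
  obtain c where c: "v = (\<Sum>a\<in>{1..l}. scale (c a) (hseq e f a))"
    "\<And>b. b \<in> {1..2*r} \<Longrightarrow> s v (hseq e f b) = (if pp b \<in> {1..l} then c (pp b) * sg (pp b) else 0)"
    using hb_K[OF hb mr _ v] l by auto
  have "c a = 0" if a: "a \<in> {1..l}" for a
  proof -
    have b: "pp a \<in> {1..2*r}" using pp_range[of a r] a l by auto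
    have "s (hseq e f (pp a)) v = 0" using vR by (simp add: Rad_def orth_def)
    then have "s v (hseq e f (pp a)) = 0" using santi by (metis neg_equal_0_iff_equal)
    then show ?thesis using c(2)[OF b] pp_pp[of a] a sg_nz[of a] by auto
  qed
  then show ?thesis using c(1) by simp
qed

lemma hb_radC:
  assumes hb: "hyperbolic_basis scale s r d e f" and mr: "dim (Rad s UNIV) \<le> 1"
    and l: "l \<le> 2*r" "1 \<le> l" and vR: "v \<in> Rad s (span (hseq e f ` {1..l}))"
  shows "\<exists>k. v = scale k (hseq e f l)" "even l \<Longrightarrow> v = 0"
proof -
  have v: "v \<in> span (hseq e f ` {1..l})" using vR by (simp add: Rad_def)
  obtain c where c: "v = (\<Sum>a\<in>{1..l}. scale (c a) (hseq e f a))"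
    "\<And>b. b \<in> {1..2*r} \<Longrightarrow> s v (hseq e f b) = (if pp b \<in> {1..l} then c (pp b) * sg (pp b) else 0)"
    using hb_K[OF hb mr _ v] l by auto
  have cz: "c a = 0" if a: "a \<in> {1..l}" "a \<noteq> l \<or> even l" for a
  proof -
    have b: "pp a \<in> {1..2*r}" using pp_range[of a r] a l by auto
    have pl: "pp a \<in> {1..l}" using a by (auto simp: pp_def) presburger
    have "hseq e f (pp a) \<in> span (hseq e f ` {1..l})" using pl by (intro span_base) auto
    then have "s (hseq e f (pp a)) v = 0" using vR by (simp add: Rad_def orth_def)
    then have "s v (hseq e f (pp a)) = 0" using santi by (metis neg_equal_0_iff_equal)
    then show ?thesis using c(2)[OF b] pp_pp[of a] a sg_nz[of a] pl by auto
  qed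
  have "v = (\<Sum>a\<in>{l}. scale (c a) (hseq e f a))"
    unfolding c(1) using cz l by (intro sum.mono_neutral_right) auto
  then show "\<exists>k. v = scale k (hseq e f l)" by auto
  show "even l \<Longrightarrow> v = 0" using c(1) cz by simp
qed

lemma hb_dir1:
  assumes hb: "hyperbolic_basis scale s r d e f" and mr: "dim (Rad s UNIV) \<le> 1"
    and n: "dim (UNIV::'v set) = n"
  shows "chamber scale s n {hflag scale e f l | l. l \<in> {1..n-1}}"
proof -
  let ?h = "hseq e f"
  let ?C = "\<lambda>l. span (?h ` {1..l})"
  have hf: "hflag scale e f l = ?C l" for l by (simp add: hflag_def)
  have n2: "n = 2*r+d" "d \<le> 1" using hb_basic[OF hb mr] n by auto
  have gob: "gobj scale s l (?C l)" if l: "l \<in> {1..n-1}" for l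
  proof -
    have "?C l \<inter> Rad s UNIV = {0}"
      using hb_radV[OF hb mr, of l] l n2 span_zero[of "?h ` {1..l}"]
      by (auto simp: Rad_def orth_def)
    moreover have "dim (Rad s (?C l)) \<le> 1"
    proof -
      have "Rad s (?C l) \<subseteq> span {?h l}"
        using hb_radC(1)[OF hb mr, of l] l n2 span_scale[of "?h l" "{?h l}"] span_base[of "?h l" "{?h l}"]
        by auto fastforce
      then have "dim (Rad s (?C l)) \<le> dim {?h l}" using dim_subset dim_span by metis
      also have "\<dots> \<le> 1" by simp
      finally show ?thesis .
    qed
    moreover have "l \<le> 2*r+d" using l n2 by auto
    ultimately show ?thesis using hb_indep[OF hb, of l]
      by (simp add: gobj_def)
  qed
  have inc: "incident s (?C k) (?C m)" if k: "k \<in> {1..n-1}" and m: "m \<in> {1..n-1}" and km: "k < m" for k m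
  proof -
    have sub: "?C k \<subseteq> ?C m" using km by (intro span_mono) auto
    have "v = 0" if v1: "v \<in> ?C k" and v2: "v \<in> Rad s (?C m)" for v
    proof (rule ccontr)
      assume "v \<noteq> 0"
      have "m \<le> 2*r" "1 \<le> m" using m n2 by auto
      then obtain c where c: "v = scale c (?h m)" using hb_radC(1)[OF hb mr _ _ v2] by auto
      then have c0: "c \<noteq> 0" using \<open>v \<noteq> 0\<close> by auto
      have "?h m = scale (inverse c) v" using c c0 by simp
      then have hm: "?h m \<in> ?C k" using v1 span_scale by simp
      have inj: "inj_on ?h {1..2*r+d}" and ind: "independent (?h ` {1..2*r+d})"
        using hb by (auto simp: hyperbolic_basis_def)
      have "?h ` {1..k} \<subseteq> ?h ` {1..2*r+d} - {?h m}"
      proof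
        fix x assume "x \<in> ?h ` {1..k}"
        then obtain a where a: "a \<in> {1..k}" "x = ?h a" by blast
        have dom: "a \<in> {1..2*r+d}" "m \<in> {1..2*r+d}" "a \<noteq> m" using a km k m n2 by auto
        then have "?h a \<noteq> ?h m" using inj_on_eq_iff[OF inj] by blast
        then show "x \<in> ?h ` {1..2*r+d} - {?h m}" using a dom by auto
      qed
      then have "?h m \<in> span (?h ` {1..2*r+d} - {?h m})" using hm span_mono by blast
      moreover have "?h m \<in> ?h ` {1..2*r+d}" using m n2 by auto
      ultimately show False using ind dependent_def by blast
    qed
    then have "?C k \<inter> Rad s (?C m) = {0}"
      using span_zero Rad_subspace[of "?C m"] subspace_0 by auto
    then show ?thesis using sub by (simp add: incident_def)
  qed
  show ?thesis unfolding chamber_def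
  proof (intro conjI ballI)
    fix X assume "X \<in> {hflag scale e f l | l. l \<in> {1..n-1}}"
    then obtain l where "X = ?C l" "l \<in> {1..n-1}" using hf by auto
    then show "\<exists>i\<in>{1..n-1}. gobj scale s i X" using gob by blast
  next
    fix X Y assume "X \<in> {hflag scale e f l | l. l \<in> {1..n-1}}" "Y \<in> {hflag scale e f l | l. l \<in> {1..n-1}}"
    then obtain k m where km: "X = ?C k" "Y = ?C m" "k \<in> {1..n-1}" "m \<in> {1..n-1}" using hf by auto
    consider "k < m" | "k = m" | "m < k" by arith
    then show "incident s X Y"
    proof cases
      case 1 then show ?thesis using inc km by auto
    next
      case 2 then show ?thesis using km by (simp add: incident_def)
    next
      case 3 then show ?thesis using inc[of m k] km by (auto simp: incident_def)
    qed
  next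
    fix i assume "i \<in> {1..n-1}"
    then show "\<exists>X\<in>{hflag scale e f l | l. l \<in> {1..n-1}}. gobj scale s i X" using gob hf by blast
  qed
qed

end

locale altchain = altsp scale Basis s
  for scale :: "'f::field \<Rightarrow> 'v::ab_group_add \<Rightarrow> 'v" and Basis :: "'v set" and s :: "'v \<Rightarrow> 'v \<Rightarrow> 'f" +
  fixes n :: nat and Y :: "nat \<Rightarrow> 'v set"
  assumes Ysub: "i \<le> n \<Longrightarrow> subspace (Y i)"
    and Ydim: "i \<le> n \<Longrightarrow> dim (Y i) = i"
    and Ymono: "i \<le> j \<Longrightarrow> j \<le> n \<Longrightarrow> Y i \<subseteq> Y j"
    and Yrad: "i < j \<Longrightarrow> j \<le> n \<Longrightarrow> Y i \<inter> Rad s (Y j) = {0}"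
    and Y0: "Y 0 = {0}"
    and Yn: "Y n = UNIV"
begin

definition E :: "nat \<Rightarrow> 'v" where "E k = (SOME v. v \<in> Rad s (Y (2*k-1)) \<and> v \<noteq> 0)"
definition F :: "nat \<Rightarrow> 'v" where
  "F k = (SOME v. v \<in> Y (2*k) \<and> (\<forall>x\<in>Y (2*k-2). s x v = 0) \<and> s (E k) v = 1)"
definition goodE where "goodE k \<longleftrightarrow> E k \<in> Rad s (Y (2*k-1)) \<and> E k \<noteq> 0"
definition goodF where
  "goodF k \<longleftrightarrow> F k \<in> Y (2*k) \<and> (\<forall>x\<in>Y (2*k-2). s x (F k) = 0) \<and> s (E k) (F k) = 1"

lemma orthE: "goodE k \<Longrightarrow> x \<in> Y (2*k-1) \<Longrightarrow> s x (E k) = 0 \<and> s (E k) x = 0"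
proof -
  assume a: "goodE k" "x \<in> Y (2*k-1)"
  then have "s x (E k) = 0" unfolding goodE_def Rad_def orth_def by blast
  then show ?thesis using santi[of x "E k"] by simp
qed
lemma orthF: "goodF k \<Longrightarrow> x \<in> Y (2*k-2) \<Longrightarrow> s x (F k) = 0 \<and> s (F k) x = 0"
proof -
  assume a: "goodF k" "x \<in> Y (2*k-2)"
  then have "s x (F k) = 0" unfolding goodF_def by blast
  then show ?thesis using santi[of x "F k"] by simp
qed
lemma memE: "goodE k \<Longrightarrow> E k \<in> Y (2*k-1)" unfolding goodE_def Rad_def by auto
lemma memF: "goodF k \<Longrightarrow> F k \<in> Y (2*k)" unfolding goodF_def by auto

lemma spanY:
  assumes "l \<le> n" "\<And>i. 1 \<le> i \<Longrightarrow> 2*i-1 \<le> l \<Longrightarrow> goodE i" "\<And>i. 1 \<le> i \<Longrightarrow> 2*i \<le> l \<Longrightarrow> goodF i"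
  shows "span (hseq E F ` {1..l}) = Y l"
  using assms
proof (induction l)
  case 0
  then show ?case using Y0 by simp
next
  case (Suc l)
  let ?h = "hseq E F"
  have IH: "span (?h ` {1..l}) = Y l" using Suc by auto
  have ins: "?h ` {1..Suc l} = insert (?h (Suc l)) (?h ` {1..l})"
    by (simp add: atLeastAtMostSuc_conv)
  have mem: "?h (Suc l) \<in> Y (Suc l) \<and> ?h (Suc l) \<notin> Y l"
  proof (cases "odd (Suc l)")
    case True
    define k where "k = (Suc l + 1) div 2"
    have k: "Suc l = 2*k-1" "1 \<le> k" using True unfolding k_def by presburger+
    have g: "goodE k" using Suc.prems k by auto
    have "?h (Suc l) = E k" using True k_def by (simp add: hseq_def)
    moreover have "E k \<in> Y (Suc l)" using memE[OF g] k by simp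
    moreover have "E k \<notin> Y l"
    proof
      assume "E k \<in> Y l"
      moreover have "E k \<in> Rad s (Y (Suc l))" using g k by (simp add: goodE_def)
      ultimately have "E k \<in> Y l \<inter> Rad s (Y (Suc l))" by blast
      then show False using Yrad[of l "Suc l"] Suc.prems g by (simp add: goodE_def)
    qed
    ultimately show ?thesis by simp
  next
    case False
    define k where "k = Suc l div 2"
    have k: "Suc l = 2*k" "1 \<le> k" using False unfolding k_def by presburger+
    have g: "goodF k" "goodE k" using Suc.prems k by auto
    have "?h (Suc l) = F k" using False k_def by (simp add: hseq_def)
    moreover have "F k \<in> Y (Suc l)" using memF[OF g(1)] k by simp
    moreover have "F k \<notin> Y l"
    proof
      assume "F k \<in> Y l"
      moreover have "l = 2*k-1" using k by simp
      ultimately have "s (E k) (F k) = 0" using orthE[OF g(2), of "F k"] by simp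
      then show False using g(1) by (simp add: goodF_def)
    qed
    ultimately show ?thesis by simp
  qed
  have sub: "span (?h ` {1..Suc l}) \<subseteq> Y (Suc l)"
  proof (rule span_minimal)
    show "subspace (Y (Suc l))" using Ysub Suc.prems by auto
    have "?h ` {1..l} \<subseteq> Y l" using IH span_superset by blast
    also have "\<dots> \<subseteq> Y (Suc l)" using Ymono Suc.prems by auto
    finally show "?h ` {1..Suc l} \<subseteq> Y (Suc l)" using ins mem by auto
  qed
  have "dim (span (?h ` {1..Suc l})) = Suc l"
  proof -
    have "dim (span (?h ` {1..Suc l})) = dim (insert (?h (Suc l)) (?h ` {1..l}))" using ins by simp
    also have "\<dots> = dim (?h ` {1..l}) + 1" using mem IH by (simp add: dim_insert)
    also have "\<dots> = Suc l" using IH Ydim[of l] Suc.prems dim_span[of "?h ` {1..l}"] by simp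
    finally show ?thesis .
  qed
  then show ?case using sub_eq_dim[OF subspace_span Ysub sub] Ydim Suc.prems by simp
qed

lemma rels_lt:
  assumes "goodE i" "goodF i" "goodE j" "goodF j" "1 \<le> i" "i < j" "2*j \<le> n"
  shows "s (E i) (E j) = 0" "s (E j) (E i) = 0" "s (F i) (F j) = 0"
    "s (E i) (F j) = 0" "s (E j) (F i) = 0"
proof -
  have m1: "Y (2*i-1) \<subseteq> Y (2*j-2)" "Y (2*i) \<subseteq> Y (2*j-2)" "Y (2*j-2) \<subseteq> Y (2*j-1)"
    by (rule Ymono; use assms in auto)+
  have Ei: "E i \<in> Y (2*j-2)" using memE[OF assms(1)] m1 by auto
  have Fi: "F i \<in> Y (2*j-2)" using memF[OF assms(2)] m1 by auto
  show "s (E i) (E j) = 0" "s (E j) (E i) = 0" using orthE[OF assms(3)] Ei m1 by auto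
  show "s (F i) (F j) = 0" "s (E i) (F j) = 0" using orthF[OF assms(4)] Ei Fi by auto
  show "s (E j) (F i) = 0" using orthE[OF assms(3)] Fi m1 by auto
qed

lemma rels:
  assumes "goodE i" "goodF i" "goodE j" "goodF j" "1 \<le> i" "1 \<le> j" "2*i \<le> n" "2*j \<le> n"
  shows "s (E i) (E j) = 0 \<and> s (F i) (F j) = 0 \<and> s (E i) (F j) = (if i = j then 1 else 0)"
proof -
  consider "i < j" | "i = j" | "j < i" by arith
  then show ?thesis
  proof cases
    case 1 then show ?thesis using rels_lt[OF assms(1-4)] assms by auto
  next
    case 2 then show ?thesis using assms(2) by (simp add: sself goodF_def)
  next
    case 3 
    have "s (F j) (F i) = 0" using rels_lt[OF assms(3,4,1,2)] 3 assms by auto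
    then have "s (F i) (F j) = 0" using santi by (metis neg_equal_0_iff_equal)
    then show ?thesis using rels_lt[OF assms(3,4,1,2)] 3 assms by auto
  qed
qed

end

context altchain begin

lemma proj:
  assumes m: "2*m \<le> n" and g: "\<And>i. i \<in> {1..m} \<Longrightarrow> goodE i \<and> goodF i"
  shows "\<exists>u\<in>Y (2*m). \<forall>x\<in>Y (2*m). s x w = s x u"
proof -
  let ?h = "hseq E F"
  define u where "u = (\<Sum>i\<in>{1..m}. scale (s (E i) w) (F i) - scale (s (F i) w) (E i))"
  have sp: "span (?h ` {1..2*m}) = Y (2*m)"
  proof (rule spanY)
    show "2*m \<le> n" using m .
    show "goodE i" if "1 \<le> i" "2*i-1 \<le> 2*m" for i using g that by auto
    show "goodF i" if "1 \<le> i" "2*i \<le> 2*m" for i using g that by auto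
  qed
  have EY: "E i \<in> Y (2*m)" "F i \<in> Y (2*m)" if "i \<in> {1..m}" for i
  proof -
    have "Y (2*i-1) \<subseteq> Y (2*m)" "Y (2*i) \<subseteq> Y (2*m)" by (rule Ymono; use that m in auto)+
    then show "E i \<in> Y (2*m)" "F i \<in> Y (2*m)" using memE memF g that by blast+
  qed
  have uY: "u \<in> Y (2*m)" unfolding u_def
    by (rule subspace_sum[OF Ysub]; use m EY Ysub subspace_diff subspace_scale in auto)
  have rel: "s (E i) (E j) = 0 \<and> s (F i) (F j) = 0 \<and> s (E i) (F j) = (if i = j then 1 else 0)"
    if "i \<in> {1..m}" "j \<in> {1..m}" for i j
    using rels[of i j] g that m by auto
  have key: "s x (w - u) = 0" if xin: "x \<in> ?h ` {1..2*m}" for x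
  proof -
    obtain a where a: "a \<in> {1..2*m}" "x = ?h a" using xin by blast
    show ?thesis
    proof (cases "odd a")
      case True
      define j where "j = (a+1) div 2"
      have j: "j \<in> {1..m}" "x = E j" using a True unfolding j_def by (auto simp: hseq_def) presburger
      have "s (E j) u = (\<Sum>i\<in>{1..m}. s (E i) w * s (E j) (F i) - s (F i) w * s (E j) (E i))"
        unfolding u_def by (simp add: ssum_r sdiff_r sscale_r)
      also have "\<dots> = (\<Sum>i\<in>{1..m}. if i = j then s (E i) w else 0)"
        using rel j by (intro sum.cong) auto
      also have "\<dots> = s (E j) w" using j by simp
      finally show ?thesis using j by (simp add: sdiff_r)
    next
      case False
      define j where "j = a div 2"
      have j: "j \<in> {1..m}" "x = F j" using a False unfolding j_def by (auto simp: hseq_def)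
      have "s (F j) u = (\<Sum>i\<in>{1..m}. s (E i) w * s (F j) (F i) - s (F i) w * s (F j) (E i))"
        unfolding u_def by (simp add: ssum_r sdiff_r sscale_r)
      also have "\<dots> = (\<Sum>i\<in>{1..m}. if i = j then s (F i) w else 0)"
      proof (intro sum.cong refl)
        fix i assume i: "i \<in> {1..m}"
        have "s (F j) (E i) = - s (E i) (F j)" by (rule santi)
        then show "s (E i) w * s (F j) (F i) - s (F i) w * s (F j) (E i) = (if i = j then s (F i) w else 0)"
          using rel[OF i j(1)] rel[OF j(1) i] by auto
      qed
      also have "\<dots> = s (F j) w" using j by simp
      finally show ?thesis using j by (simp add: sdiff_r)
    qed
  qed
  have "s x (w - u) = 0" if "x \<in> Y (2*m)" for x
    using span_lorth[of "?h ` {1..2*m}" "w - u" x] key that sp by blast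
  then show ?thesis using uY by (intro bexI[of _ u]) (auto simp: sdiff_r)
qed


lemma existE:
  assumes k: "1 \<le> k" "2*k-1 \<le> n" and g: "\<And>i. i \<in> {1..k-1} \<Longrightarrow> goodE i \<and> goodF i"
  shows "\<exists>v. v \<in> Rad s (Y (2*k-1)) \<and> v \<noteq> 0"
proof -
  define m where "m = k - 1"
  have m: "2*m \<le> n" "2*k-1 = Suc (2*m)" using k by (auto simp: m_def)
  have Ym: "subspace (Y (2*m))" "dim (Y (2*m)) = 2*m" using Ysub Ydim m by auto
  have Yk: "subspace (Y (2*k-1))" "dim (Y (2*k-1)) = Suc (2*m)" using Ysub Ydim m k by auto
  have sub: "Y (2*m) \<subseteq> Y (2*k-1)" using Ymono m k by auto
  have "\<not> Y (2*k-1) \<subseteq> Y (2*m)"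
  proof
    assume "Y (2*k-1) \<subseteq> Y (2*m)"
    then have "dim (Y (2*k-1)) \<le> dim (Y (2*m))" by (rule dim_subset)
    then show False using Ym Yk by simp
  qed
  then obtain w where w: "w \<in> Y (2*k-1)" "w \<notin> Y (2*m)" by blast
  obtain u where u: "u \<in> Y (2*m)" "\<And>x. x \<in> Y (2*m) \<Longrightarrow> s x w = s x u"
    using proj[OF m(1), of w] g unfolding m_def by auto
  define v where "v = w - u"
  have vY: "v \<in> Y (2*k-1)" unfolding v_def using subspace_diff[OF Yk(1) w(1)] u sub by auto
  have v0: "v \<noteq> 0" using w u unfolding v_def by auto
  have vnot: "v \<notin> span (Y (2*m))"
  proof
    assume "v \<in> span (Y (2*m))"
    then have "v \<in> Y (2*m)" using Ym span_eq_iff by blast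
    then have "v + u \<in> Y (2*m)" using subspace_add[OF Ym(1)] u by auto
    then show False using w unfolding v_def by simp
  qed
  have spsub: "span (insert v (Y (2*m))) \<subseteq> Y (2*k-1)"
    using span_minimal[OF _ Yk(1)] vY sub by auto
  have "dim (span (insert v (Y (2*m)))) = Suc (2*m)"
    using dim_insert[of v "Y (2*m)"] vnot Ym by simp
  then have eqs: "span (insert v (Y (2*m))) = Y (2*k-1)"
    using sub_eq_dim[OF subspace_span Yk(1) spsub] Yk by simp
  have orthv: "s x v = 0" if "x \<in> Y (2*k-1)" for x
  proof -
    have "x \<in> span (insert v (Y (2*m)))" using eqs that by simp
    moreover have "s y v = 0" if yin: "y \<in> insert v (Y (2*m))" for y
    proof (cases "y = v")
      case True then show ?thesis by (simp add: sself)
    next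
      case False then have "y \<in> Y (2*m)" using yin by auto
      then show ?thesis using u(2) unfolding v_def by (simp add: sdiff_r)
    qed
    ultimately show ?thesis using span_lorth by blast
  qed
  show ?thesis using vY v0 orthv by (auto simp: Rad_def orth_def)
qed

lemma existF:
  assumes k: "1 \<le> k" "2*k \<le> n" and g: "\<And>i. i \<in> {1..k-1} \<Longrightarrow> goodE i \<and> goodF i"
    and gk: "goodE k"
  shows "\<exists>v. v \<in> Y (2*k) \<and> (\<forall>x\<in>Y (2*k-2). s x v = 0) \<and> s (E k) v = 1"
proof -
  define m where "m = k - 1"
  have m: "2*m \<le> n" "2*k-2 = 2*m" using k by (auto simp: m_def)
  have Yk: "subspace (Y (2*k))" using Ysub k by auto
  have sub: "Y (2*m) \<subseteq> Y (2*k-1)" "Y (2*k-1) \<subseteq> Y (2*k)" using Ymono m k by auto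
  have Ek: "E k \<in> Y (2*k)" using memE[OF gk] sub by auto
  have "E k \<notin> Rad s (Y (2*k))"
  proof
    assume "E k \<in> Rad s (Y (2*k))"
    then have "E k \<in> Y (2*k-1) \<inter> Rad s (Y (2*k))" using memE[OF gk] by auto
    then show False using Yrad[of "2*k-1" "2*k"] k gk by (auto simp: goodE_def)
  qed
  then obtain x where x: "x \<in> Y (2*k)" "s x (E k) \<noteq> 0" using Ek by (auto simp: Rad_def orth_def)
  define c where "c = s (E k) x"
  have c: "c \<noteq> 0" using x santi[of x "E k"] unfolding c_def by auto
  obtain u where u: "u \<in> Y (2*m)" "\<And>y. y \<in> Y (2*m) \<Longrightarrow> s y x = s y u"
    using proj[OF m(1), of x] g unfolding m_def by auto
  define v where "v = scale (inverse c) (x - u)"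
  have uk: "u \<in> Y (2*k)" using u sub by auto
  have vY: "v \<in> Y (2*k)" unfolding v_def using subspace_scale[OF Yk] subspace_diff[OF Yk x(1) uk] by auto
  have "s (E k) u = 0" using orthE[OF gk, of u] u sub by auto
  then have "s (E k) v = 1" unfolding v_def using c by (simp add: sscale_r sdiff_r c_def)
  moreover have "\<forall>y\<in>Y (2*k-2). s y v = 0" using u m unfolding v_def by (simp add: sscale_r sdiff_r)
  ultimately show ?thesis using vY by blast
qed

lemma goodAll: "2*k \<le> n \<Longrightarrow> i \<in> {1..k} \<Longrightarrow> goodE i \<and> goodF i"
proof (induction k arbitrary: i)
  case 0 then show ?case by simp
next
  case (Suc k)
  have g: "\<And>i. i \<in> {1..Suc k - 1} \<Longrightarrow> goodE i \<and> goodF i" using Suc by auto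
  have gE: "goodE (Suc k)"
  proof -
    have "\<exists>v. v \<in> Rad s (Y (2*Suc k-1)) \<and> v \<noteq> 0" using existE[of "Suc k"] g Suc.prems by auto
    then show ?thesis unfolding goodE_def E_def by (rule someI_ex)
  qed
  have gF: "goodF (Suc k)"
  proof -
    have "\<exists>v. v \<in> Y (2*Suc k) \<and> (\<forall>x\<in>Y (2*Suc k-2). s x v = 0) \<and> s (E (Suc k)) v = 1"
      using existF[of "Suc k"] g gE Suc.prems by auto
    then show ?thesis unfolding goodF_def F_def by (rule someI_ex)
  qed
  show ?case using Suc gE gF by (cases "i = Suc k") auto
qed

lemma goodE_last: "n = 2*k+1 \<Longrightarrow> goodE (k+1)"
proof -
  assume n: "n = 2*k+1"
  have "\<exists>v. v \<in> Rad s (Y (2*(k+1)-1)) \<and> v \<noteq> 0"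
    using existE[of "k+1"] goodAll[of k] n by auto
  then show ?thesis unfolding goodE_def E_def by (rule someI_ex)
qed


lemma chain_basis:
  assumes mr: "dim (Rad s UNIV) \<le> 1"
  shows "hyperbolic_basis scale s (n div 2) (n mod 2) E F \<and> (\<forall>l\<le>n. span (hseq E F ` {1..l}) = Y l)"
proof -
  define r where "r = n div 2"
  define d where "d = n mod 2"
  have nrd: "2*r+d = n" unfolding r_def d_def by simp
  let ?h = "hseq E F"
  have g: "goodE i \<and> goodF i" if "i \<in> {1..r}" for i using goodAll[of r i] that nrd by auto
  have gl: "odd n \<Longrightarrow> goodE (r+1)"
  proof -
    assume "odd n"
    then have "n = 2*r+1" unfolding r_def by presburger
    then show ?thesis by (rule goodE_last)
  qed
  have sp: "span (?h ` {1..l}) = Y l" if l: "l \<le> n" for l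
  proof (rule spanY[OF l])
    fix i assume i: "1 \<le> i" "2*i-1 \<le> l"
    show "goodE i"
    proof (cases "i \<le> r")
      case True then show ?thesis using g i by auto
    next
      case False then have "i = r+1" "odd n" using i l nrd unfolding d_def by auto
      then show ?thesis using gl by simp
    qed
  next
    fix i assume i: "1 \<le> i" "2*i \<le> l"
    then have "i \<in> {1..r}" using l nrd unfolding d_def by auto
    then show "goodF i" using g by auto
  qed
  have dimU: "dim (UNIV::'v set) = n" using Ydim[of n] Yn by simp
  have spU: "span (?h ` {1..n}) = UNIV" using sp[of n] Yn by simp
  have fin: "finite (?h ` {1..n})" by simp
  have cle: "card (?h ` {1..n}) \<le> n" using card_image_le[of "{1..n}" ?h] by simp
  have cge: "n \<le> card (?h ` {1..n})" using dim_le_card[of UNIV "?h ` {1..n}"] spU fin dimU by simp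
  have card: "card (?h ` {1..n}) = n" using cle cge by simp
  have inj: "inj_on ?h {1..n}" using card by (simp add: inj_on_iff_eq_card)
  have ind: "independent (?h ` {1..n})"
    using card_eq_dim[of "?h ` {1..n}" UNIV] card dimU fin spU by simp
  have Rsub: "subspace (Rad s UNIV)" using Rad_subspace by simp
  have radpart: "dim (Rad s UNIV) = d \<and> independent (E ` {r+1..r+d}) \<and> span (E ` {r+1..r+d}) = Rad s UNIV"
  proof (cases "odd n")
    case True
    then have d1: "d = 1" unfolding d_def by presburger
    have ER: "E (r+1) \<in> Rad s UNIV" "E (r+1) \<noteq> 0" using gl[OF True] nrd d1 Yn
      by (auto simp: goodE_def)
    have "dim {E (r+1)} \<le> dim (Rad s UNIV)" using ER by (intro dim_subset) auto
    then have dR: "dim (Rad s UNIV) = 1" using mr ER by simp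
    have ssub: "span {E (r+1)} \<subseteq> Rad s UNIV" using span_minimal[OF _ Rsub] ER by auto
    have "span {E (r+1)} = Rad s UNIV"
      using sub_eq_dim[OF subspace_span Rsub ssub] dR ER by simp
    then show ?thesis using d1 dR ER by simp
  next
    case False
    then have d0: "d = 0" unfolding d_def by presburger
    have "Rad s UNIV = {0}"
    proof (cases "n = 0")
      case True
      then have U: "(UNIV::'v set) = {0}" using Yn Y0 by simp
      show ?thesis using U subspace_0[OF Rsub] by blast
    next
      case n0: False
      have r1: "1 \<le> r" "n = 2*r" using n0 nrd d0 by auto
      have gr: "goodE r" "goodF r" using g r1 by auto
      have ins: "?h ` {1..2*r} = insert (F r) (?h ` {1..2*r-1})"
      proof -
        have "{1..2*r} = insert (2*r) {1..2*r-1}" using r1 by auto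
        moreover have "?h (2*r) = F r" by (simp add: hseq_def)
        ultimately show ?thesis by simp
      qed
      have "v = 0" if v: "v \<in> Rad s UNIV" for v
      proof -
        have "v \<in> span (?h ` {1..2*r})" using spU r1 by simp
        then obtain c where c: "v - scale c (F r) \<in> span (?h ` {1..2*r-1})"
          using ins span_breakdown_eq by auto
        then have cY: "v - scale c (F r) \<in> Y (2*r-1)" using sp[of "2*r-1"] r1 by simp
        have "s (E r) v = 0" using v santi[of "E r" v] by (auto simp: Rad_def orth_def)
        moreover have "s (E r) (v - scale c (F r)) = 0" using orthE[OF gr(1) cY] by simp
        ultimately have "c = 0" using gr(2) by (simp add: sdiff_r sscale_r goodF_def)
        then have "v \<in> Y (2*r-1) \<inter> Rad s (Y n)" using cY v Yn by simp
        then show ?thesis using Yrad[of "2*r-1" n] r1 by auto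
      qed
      then show ?thesis using Rsub subspace_0 by auto
    qed
    then show ?thesis using d0 independent_empty by simp
  qed
  have rk: "2*r = rank scale s UNIV" using radpart dimU nrd by (simp add: rank_def)
  have rels2: "\<forall>i\<in>{1..r}. \<forall>j\<in>{1..r}. s (E i) (E j) = 0 \<and> s (F i) (F j) = 0 \<and>
        s (E i) (F j) = (if i = j then 1 else 0)"
    using g rels nrd by fastforce
  have "hyperbolic_basis scale s r d E F"
    unfolding hyperbolic_basis_def using rk radpart rels2 inj ind spU nrd by simp
  then show ?thesis using sp unfolding r_def d_def by simp
qed

end

context altsp begin

lemma dir2:
  assumes mr: "dim (Rad s UNIV) \<le> 1" and n: "dim (UNIV::'v set) = n" and ch: "chamber scale s n C"
  shows "\<exists>r d e f. hyperbolic_basis scale s r d e f \<and> C = {hflag scale e f l | l. l \<in> {1..n-1}}"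
proof -
  have c1: "\<And>Z. Z \<in> C \<Longrightarrow> \<exists>i\<in>{1..n-1}. gobj scale s i Z"
    and c2: "\<And>Z W. Z \<in> C \<Longrightarrow> W \<in> C \<Longrightarrow> incident s Z W"
    and c3: "\<forall>i\<in>{1..n-1}. \<exists>Z\<in>C. gobj scale s i Z"
    using ch unfolding chamber_def by auto
  obtain X where X: "\<And>i. i \<in> {1..n-1} \<Longrightarrow> X i \<in> C \<and> gobj scale s i (X i)"
  proof -
    have "\<forall>i\<in>{1..n-1}. \<exists>Z. Z \<in> C \<and> gobj scale s i Z" using c3 by blast
    from bchoice[OF this] obtain g where "\<forall>i\<in>{1..n-1}. g i \<in> C \<and> gobj scale s i (g i)" by blast
    then show ?thesis using that by blast
  qed
  have Xs: "subspace (X i)" "dim (X i) = i" "X i \<inter> Rad s UNIV = {0}" if "i \<in> {1..n-1}" for i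
    using X[OF that] by (auto simp: gobj_def)
  have incl: "X i \<subseteq> X j" if ij: "i \<in> {1..n-1}" "j \<in> {1..n-1}" "i \<le> j" for i j
  proof -
    have "incident s (X i) (X j)" using c2 X ij by blast
    then have "X i = X j \<or> X i \<subseteq> X j \<or> X j \<subseteq> X i" unfolding incident_def by blast
    moreover have "X j \<subseteq> X i \<Longrightarrow> X j = X i"
      by (rule sub_eq_dim[OF Xs(1)[OF ij(2)] Xs(1)[OF ij(1)]]) (simp_all add: Xs(2)[OF ij(1)] Xs(2)[OF ij(2)] ij(3))
    ultimately show ?thesis by blast
  qed
  have radi: "X i \<inter> Rad s (X j) = {0}" if ij: "i \<in> {1..n-1}" "j \<in> {1..n-1}" "i < j" for i j
  proof -
    have "incident s (X i) (X j)" using c2 X ij by blast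
    moreover have "X i \<noteq> X j"
    proof
      assume "X i = X j"
      then have "dim (X i) = dim (X j)" by simp
      then show False using Xs(2)[OF ij(1)] Xs(2)[OF ij(2)] ij(3) by simp
    qed
    moreover have "\<not> X j \<subseteq> X i"
    proof
      assume "X j \<subseteq> X i"
      then have "dim (X j) \<le> dim (X i)" by (rule dim_subset)
      then show False using Xs(2)[OF ij(1)] Xs(2)[OF ij(2)] ij(3) by simp
    qed
    ultimately show ?thesis unfolding incident_def by blast
  qed
  have Ceq: "C = X ` {1..n-1}"
  proof
    show "X ` {1..n-1} \<subseteq> C" using X by auto
    show "C \<subseteq> X ` {1..n-1}"
    proof
      fix Z assume Z: "Z \<in> C"
      obtain i where i: "i \<in> {1..n-1}" "gobj scale s i Z" using c1[OF Z] by blast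
      have Zs: "subspace Z" "dim Z = i" using i by (auto simp: gobj_def)
      have "incident s Z (X i)" using c2 Z X i by blast
      moreover have "Z \<subseteq> X i \<Longrightarrow> Z = X i"
        by (rule sub_eq_dim[OF Zs(1) Xs(1)[OF i(1)]]) (simp_all add: Zs(2) Xs(2)[OF i(1)])
      moreover have "X i \<subseteq> Z \<Longrightarrow> X i = Z"
        by (rule sub_eq_dim[OF Xs(1)[OF i(1)] Zs(1)]) (simp_all add: Zs(2) Xs(2)[OF i(1)])
      ultimately have "Z = X i" unfolding incident_def by blast
      then show "Z \<in> X ` {1..n-1}" using i by auto
    qed
  qed
  define Y where "Y i = (if i = n then UNIV else if i = 0 then {0} else X i)" for i
  have U0: "n = 0 \<Longrightarrow> (UNIV::'v set) = {0}" using n dim_eq_0 by blast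
  have R0: "0 \<in> Rad s Z" if "subspace Z" for Z using subspace_0[OF Rad_subspace[OF that]] .
  have YX: "Y i = X i" if "i \<in> {1..n-1}" for i using that by (auto simp: Y_def)
  interpret ch: altchain scale Basis s n Y
  proof
    fix i assume i: "i \<le> n"
    show "subspace (Y i)" using Xs[of i] i by (auto simp: Y_def)
    show "dim (Y i) = i" using Xs[of i] i n by (auto simp: Y_def)
  next
    fix i j assume ij: "i \<le> j" "j \<le> n"
    show "Y i \<subseteq> Y j"
    proof (cases "j = n")
      case True then show ?thesis by (simp add: Y_def)
    next
      case False
      then have "i \<noteq> n" using ij by auto
      moreover have "i = 0 \<Longrightarrow> j \<noteq> 0 \<Longrightarrow> {0} \<subseteq> X j" using Xs[of j] subspace_0 ij False by auto
      ultimately show ?thesis using incl[of i j] ij False by (auto simp: Y_def)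
    qed
  next
    fix i j assume ij: "i < j" "j \<le> n"
    have sj: "subspace (Y j)" using Xs[of j] ij by (auto simp: Y_def)
    show "Y i \<inter> Rad s (Y j) = {0}"
    proof (cases "i = 0")
      case True
      then have "Y i = {0}" using ij by (simp add: Y_def)
      then show ?thesis using R0[OF sj] by auto
    next
      case i0: False
      show ?thesis
      proof (cases "j = n")
        case True then show ?thesis using Xs(3)[of i] ij i0 by (auto simp: Y_def)
      next
        case False then show ?thesis using radi[of i j] ij i0 by (auto simp: Y_def)
      qed
    qed
  next
    show "Y 0 = {0}" using U0 by (simp add: Y_def)
    show "Y n = UNIV" by (simp add: Y_def)
  qed
  have cb: "hyperbolic_basis scale s (n div 2) (n mod 2) ch.E ch.F"
    "\<And>l. l \<le> n \<Longrightarrow> span (hseq ch.E ch.F ` {1..l}) = Y l"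
    using ch.chain_basis[OF mr] by auto
  have "C = {hflag scale ch.E ch.F l | l. l \<in> {1..n-1}}"
  proof -
    have hx: "hflag scale ch.E ch.F l = X l" if "l \<in> {1..n-1}" for l
    proof -
      have "l \<le> n" using that by auto
      then show ?thesis using cb(2)[of l] YX[OF that] by (simp add: hflag_def)
    qed
    have "X ` {1..n-1} = {hflag scale ch.E ch.F l | l. l \<in> {1..n-1}}"
    proof
      show "X ` {1..n-1} \<subseteq> {hflag scale ch.E ch.F l | l. l \<in> {1..n-1}}" using hx by fastforce
      show "{hflag scale ch.E ch.F l | l. l \<in> {1..n-1}} \<subseteq> X ` {1..n-1}" using hx by fastforce
    qed
    then show ?thesis using Ceq by simp
  qed
  then show ?thesis using cb(1) by blast
qed

end

theorem corollary3p1: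
  fixes scale :: "'f::field \<Rightarrow> 'v::ab_group_add \<Rightarrow> 'v"
    and s :: "'v \<Rightarrow> 'v \<Rightarrow> 'f" and n :: nat
  assumes "vector_space scale"
    and "\<exists>B. finite B \<and> module.span scale B = UNIV"
    and "vector_space.dim scale (UNIV :: 'v set) = n"
    and "alt_bilinear scale s"
    and "max_rank scale s"
  shows "(\<forall>r d e f. hyperbolic_basis scale s r d e f \<longrightarrow>
            chamber scale s n {hflag scale e f l | l. l \<in> {1..n-1}}) \<and>
         (\<forall>C. chamber scale s n C \<longrightarrow>
            (\<exists>r d e f. hyperbolic_basis scale s r d e f \<and>
               C = {hflag scale e f l | l. l \<in> {1..n-1}}))"
proof -
  interpret vs: vector_space scale by (rule assms(1))
  obtain B0 where B0: "finite B0" "vs.span B0 = UNIV" using assms(2) by blast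
  obtain B where B: "vs.independent B" "UNIV \<subseteq> vs.span B"
    using vs.basis_exists[of UNIV] by blast
  have fB: "finite B" using vs.independent_span_bound[OF B0(1) B(1)] B0(2) by auto
  interpret alt: altsp scale B s
  proof
    show "finite B" by (rule fB)
    show "vs.independent B" by (rule B(1))
    show "vs.span B = UNIV" using B(2) by auto
    show "alt_bilinear scale s" by (rule assms(4))
  qed
  have mr: "vs.dim (Rad s UNIV) \<le> 1" using assms(5) by (simp add: max_rank_def)
  show ?thesis
    using alt.hb_dir1[OF _ mr assms(3)] alt.dir2[OF mr assms(3)] by blast
qed

end
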